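(* Every left-invariant parak\"ahler structure on a nilpotent Lie group is Ricci-flat.
   Context: A parak\"ahler structure on a $2n$-manifold consists of a splitting $TM=V\oplus H$ into rank-$n$ distributions and a pseudoriemannian metric $g$ with $g(KX,KY)=-g(X,Y)$ for $K=\mathrm{id}_V-\mathrm{id}_H$, such that the two-form $F(X,Y)=g(KX,Y)$ is parallel for the Levi-Civita connection of $g$. Left-invariant means $V$, $H$ and $g$ are invariant under left translations. *)

theory Defs
  imports "HOL-Analysis.Analysis"
begin

text \<open>Left-invariant objects on a Lie group are encoded on its Lie algebra,
  a finite-dimensional real vector space, here real^'n with a bracket.\<close>

definition lie_algebra :: "(real^'n \<Rightarrow> real^'n \<Rightarrow> real^'n) \<Rightarrow> bool" where
  "lie_algebra br \<longleftrightarrow> bilinear br \<and> (\<forall>x. br x x = 0) \<and>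
     (\<forall>x y z. br x (br y z) + br y (br z x) + br z (br x y) = 0)"

fun lcs :: "(real^'n \<Rightarrow> real^'n \<Rightarrow> real^'n) \<Rightarrow> nat \<Rightarrow> (real^'n) set" where
  "lcs br 0 = UNIV"
| "lcs br (Suc k) = span {br x y | x y. y \<in> lcs br k}"

definition nilpotent_lie_algebra :: "(real^'n \<Rightarrow> real^'n \<Rightarrow> real^'n) \<Rightarrow> bool" where
  "nilpotent_lie_algebra br \<longleftrightarrow> lie_algebra br \<and> (\<exists>k. lcs br k = {0})"

definition para_splitting :: "(real^'n) set \<Rightarrow> (real^'n) set \<Rightarrow> bool" where
  "para_splitting V H \<longleftrightarrow> subspace V \<and> subspace H \<and> V \<inter> H = {0} \<and>
     (\<forall>x. \<exists>v\<in>V. \<exists>h\<in>H. x = v + h) \<and> dim V = dim H"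

definition paraK :: "(real^'n) set \<Rightarrow> (real^'n) set \<Rightarrow> real^'n \<Rightarrow> real^'n" where
  "paraK V H x = (THE y. \<exists>v\<in>V. \<exists>h\<in>H. x = v + h \<and> y = v - h)"

definition pseudo_metric :: "(real^'n \<Rightarrow> real^'n \<Rightarrow> real) \<Rightarrow> bool" where
  "pseudo_metric g \<longleftrightarrow> bilinear g \<and> (\<forall>x y. g x y = g y x) \<and>
     (\<forall>x. (\<forall>y. g x y = 0) \<longrightarrow> x = 0)"

text \<open>Levi-Civita connection of a left-invariant metric, restricted to left-invariant
  vector fields: torsion-free and metric (g(Y,Z) is constant for invariant fields).
  By the Koszul formula such D exists and is unique.\<close>
definition levi_civita ::
  "(real^'n \<Rightarrow> real^'n \<Rightarrow> real^'n) \<Rightarrow> (real^'n \<Rightarrow> real^'n \<Rightarrow> real) \<Rightarrow>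
   (real^'n \<Rightarrow> real^'n \<Rightarrow> real^'n) \<Rightarrow> bool" where
  "levi_civita br g D \<longleftrightarrow> bilinear D \<and>
     (\<forall>X Y. D X Y - D Y X = br X Y) \<and>
     (\<forall>X Y Z. g (D X Y) Z + g Y (D X Z) = 0)"

definition parakaehler_form ::
  "(real^'n \<Rightarrow> real^'n \<Rightarrow> real) \<Rightarrow> (real^'n) set \<Rightarrow> (real^'n) set \<Rightarrow> real^'n \<Rightarrow> real^'n \<Rightarrow> real" where
  "parakaehler_form g V H X Y = g (paraK V H X) Y"

definition left_inv_parakaehler ::
  "(real^'n \<Rightarrow> real^'n \<Rightarrow> real^'n) \<Rightarrow> (real^'n) set \<Rightarrow> (real^'n) set \<Rightarrow>
   (real^'n \<Rightarrow> real^'n \<Rightarrow> real) \<Rightarrow> bool" where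
  "left_inv_parakaehler br V H g \<longleftrightarrow> para_splitting V H \<and> pseudo_metric g \<and>
     (\<forall>X Y. g (paraK V H X) (paraK V H Y) = - g X Y) \<and>
     (\<forall>D. levi_civita br g D \<longrightarrow>
        (\<forall>X Y Z. parakaehler_form g V H (D X Y) Z + parakaehler_form g V H Y (D X Z) = 0))"

definition curvature ::
  "(real^'n \<Rightarrow> real^'n \<Rightarrow> real^'n) \<Rightarrow> (real^'n \<Rightarrow> real^'n \<Rightarrow> real^'n) \<Rightarrow>
   real^'n \<Rightarrow> real^'n \<Rightarrow> real^'n \<Rightarrow> real^'n" where
  "curvature br D X Y Z = D X (D Y Z) - D Y (D X Z) - D (br X Y) Z"

definition ricci ::
  "(real^'n \<Rightarrow> real^'n \<Rightarrow> real^'n) \<Rightarrow> (real^'n \<Rightarrow> real^'n \<Rightarrow> real^'n) \<Rightarrow>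
   real^'n \<Rightarrow> real^'n \<Rightarrow> real" where
  "ricci br D Y Z = trace (matrix (\<lambda>X. curvature br D X Y Z))"

end

theory Submission
  imports Defs
begin


lemma orth_expand:
  fixes B :: "('a::euclidean_space) set"
  assumes orth: "pairwise orthogonal B" and x: "x \<in> span B"
  shows "x = (\<Sum>b\<in>B. (b \<bullet> x / (b \<bullet> b)) *\<^sub>R b)"
proof -
  define y where "y = x - (\<Sum>b\<in>B. (b \<bullet> x / (b \<bullet> b)) *\<^sub>R b)"
  have "y \<in> span B" unfolding y_def
    by (intro span_diff x span_sum span_scale span_base) auto
  then have "orthogonal y y" using Gram_Schmidt_step[OF orth, of y x] y_def by simp
  then have "y = 0" by (simp add: orthogonal_def)
  then show ?thesis by (simp add: y_def)
qed

lemma trace_formula: "trace (matrix (f::real^'n\<Rightarrow>real^'n)) = (\<Sum>i\<in>UNIV. f (axis i 1) $ i)"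
  by (simp add: trace_def matrix_def)

lemma trace_orth:
  fixes f :: "real^'n \<Rightarrow> real^'n"
  assumes orth: "pairwise orthogonal B" and sp: "span B = UNIV" and lf: "linear f"
  shows "trace (matrix f) = (\<Sum>b\<in>B. (f b \<bullet> b) / (b \<bullet> b))"
proof -
  have fin: "finite B" using orth pairwise_orthogonal_imp_finite by blast
  have e: "axis i 1 = (\<Sum>b\<in>B. (b \<bullet> axis i 1 / (b \<bullet> b)) *\<^sub>R b)" for i
    using orth_expand[OF orth, of "axis i 1"] sp by simp
  have "f (axis i 1) $ i = (\<Sum>b\<in>B. (b $ i / (b \<bullet> b)) * (f b $ i))" for i
  proof -
    have "f (axis i 1) = (\<Sum>b\<in>B. (b \<bullet> axis i 1 / (b \<bullet> b)) *\<^sub>R f b)"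
      by (subst e) (simp add: linear_sum[OF lf] linear_scale[OF lf])
    then show ?thesis by (simp add: inner_axis sum_component)
  qed
  then have "trace (matrix f) = (\<Sum>i\<in>UNIV. \<Sum>b\<in>B. (b $ i / (b \<bullet> b)) * (f b $ i))"
    by (simp add: trace_formula)
  also have "\<dots> = (\<Sum>b\<in>B. \<Sum>i\<in>UNIV. (b $ i / (b \<bullet> b)) * (f b $ i))"
    by (rule sum.swap)
  also have "\<dots> = (\<Sum>b\<in>B. (f b \<bullet> b) / (b \<bullet> b))"
    by (intro sum.cong refl) (simp add: inner_vec_def sum_divide_distrib mult.commute)
  finally show ?thesis .
qed

lemma linear_funpow: "linear (f::'a::real_vector \<Rightarrow> 'a) \<Longrightarrow> linear (f ^^ k)"
  by (induction k) (auto simp: linear_compose linear_iff)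

lemma nilpotent_trace:
  fixes A :: "real^'n \<Rightarrow> real^'n"
  assumes lA: "linear A" and nil: "\<And>x. (A ^^ m) x = 0"
  shows "trace (matrix A) = 0"
proof -
  have "\<exists>B. pairwise orthogonal B \<and> span B = {x. (A ^^ j) x = 0} \<and> (\<forall>b\<in>B. A b \<bullet> b = 0)" for j
  proof (induction j)
    case 0
    show ?case by (rule exI[of _ "{}"]) auto
  next
    case (Suc j)
    then obtain B where B: "pairwise orthogonal B" "span B = {x. (A ^^ j) x = 0}"
      "\<forall>b\<in>B. A b \<bullet> b = 0" by blast
    define T where "T = {x. (A ^^ Suc j) x = 0}"
    have subT: "subspace T" unfolding T_def
      using linear_subspace_kernel[OF linear_funpow[OF lA, of "Suc j"]] by simp
    have BT: "B \<subseteq> T"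
    proof
      fix b assume "b \<in> B"
      then have "(A ^^ j) b = 0" using B(2) span_base by blast
      then show "b \<in> T" unfolding T_def using linear_0[OF lA]
        by (simp add: funpow_swap1[symmetric])
    qed
    obtain U where U: "U \<inter> (insert 0 B) = {}" "pairwise orthogonal (B \<union> U)"
      "span (B \<union> U) = span (B \<union> T)"
      using orthogonal_extension_strong[OF B(1)] by blast
    have spT: "span (B \<union> T) = T" using BT subT
      by (metis Un_absorb1 span_eq_iff)
    have "\<forall>b\<in>B \<union> U. A b \<bullet> b = 0"
    proof
      fix b assume b: "b \<in> B \<union> U"
      show "A b \<bullet> b = 0"
      proof (cases "b \<in> B")
        case True then show ?thesis using B(3) by blast
      next
        case False
        then have bU: "b \<in> U" using b by blast
        have "b \<in> T" using U(3) spT span_base[of b "B \<union> U"] bU by blast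
        then have "(A ^^ j) (A b) = 0" unfolding T_def by (simp add: funpow_swap1)
        then have Ab: "A b \<in> span B" using B(2) by blast
        have "orthogonal b y" if "y \<in> B" for y
        proof -
          have "b \<noteq> y" using that False by blast
          moreover have "b \<in> B \<union> U" "y \<in> B \<union> U" using bU that by auto
          ultimately show ?thesis using U(2) unfolding pairwise_def by blast
        qed
        then have "orthogonal b (A b)" using orthogonal_to_span[OF Ab] by blast
        then show ?thesis by (simp add: orthogonal_def inner_commute)
      qed
    qed
    then show ?case using U(2) U(3) spT unfolding T_def by blast
  qed
  then obtain B where B: "pairwise orthogonal B" "span B = {x. (A ^^ m) x = 0}"
      "\<forall>b\<in>B. A b \<bullet> b = 0" by blast
  have "span B = UNIV" using B(2) nil by auto
  then show ?thesis using trace_orth[OF B(1) _ lA] B(3) by simp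
qed



lemma lin_expand:
  fixes \<phi> :: "real^'n \<Rightarrow> real"
  assumes "linear \<phi>"
  shows "\<phi> x = (\<Sum>j\<in>UNIV. x$j * \<phi> (axis j 1))"
proof -
  interpret l: linear \<phi> by fact
  have "\<phi> x = \<phi> (\<Sum>j\<in>UNIV. x$j *\<^sub>R axis j 1)"
    using basis_expansion[of x] by (simp add: scalar_mult_eq_scaleR)
  also have "\<dots> = (\<Sum>j\<in>UNIV. x$j * \<phi> (axis j 1))"
    by (simp add: l.sum l.scale)
  finally show ?thesis .
qed

lemma bil_linL: "bilinear g \<Longrightarrow> linear (\<lambda>x. g x y)" by (simp add: bilinear_def)
lemma bil_linR: "bilinear g \<Longrightarrow> linear (\<lambda>y. g x y)" by (simp add: bilinear_def)

lemma dual_vec: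
  fixes g :: "real^'n \<Rightarrow> real^'n \<Rightarrow> real"
  assumes pm: "pseudo_metric g"
  shows "\<exists>w. \<forall>x. g x w = x $ i"
proof -
  have bil: "bilinear g" and sym: "\<And>x y. g x y = g y x"
    and nd: "\<And>x. (\<forall>y. g x y = 0) \<Longrightarrow> x = 0"
    using pm unfolding pseudo_metric_def by auto
  define \<Phi> where "\<Phi> w = (\<chi> j. g (axis j 1) w)" for w
  have exp: "g x w = (\<Sum>j\<in>UNIV. x$j * g (axis j 1) w)" for x w
    using lin_expand[OF bil_linL[OF bil]] by blast
  have lin: "linear \<Phi>"
  proof -
    interpret r: linear "\<lambda>y. g x y" for x using bil_linR[OF bil] .
    show ?thesis unfolding \<Phi>_def
      by (intro linearI) (simp_all add: vec_eq_iff r.add r.scale)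
  qed
  have "inj \<Phi>"
    unfolding linear_injective_0[OF lin]
  proof (intro allI impI)
    fix w assume "\<Phi> w = 0"
    then have "g (axis j 1) w = 0" for j by (simp add: \<Phi>_def vec_eq_iff)
    then have "g x w = 0" for x using exp[of x w] by simp
    then show "w = 0" using nd[of w] sym by simp
  qed
  then have "surj \<Phi>" using linear_injective_imp_surjective[OF lin] by blast
  then obtain w where w: "\<Phi> w = axis i 1" by (metis surjD[of \<Phi> "axis i 1"])
  have "g x w = x $ i" for x
  proof -
    have "g x w = (\<Sum>j\<in>UNIV. x$j * (\<Phi> w) $ j)" using exp[of x w] by (simp add: \<Phi>_def)
    also have "\<dots> = (\<Sum>j\<in>UNIV. if j = i then x$j else 0)" using w
      by (intro sum.cong refl) (simp add: axis_def)
    also have "\<dots> = x $ i" by simp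
    finally show ?thesis .
  qed
  then show ?thesis by blast
qed

lemma trace_dual:
  fixes g :: "real^'n \<Rightarrow> real^'n \<Rightarrow> real"
  assumes "\<And>i x. g x (w i) = x $ i"
  shows "trace (matrix f) = (\<Sum>i\<in>UNIV. g (f (axis i 1)) (w i))"
  by (simp add: trace_formula assms)

lemma trace_adjoint:
  fixes g :: "real^'n \<Rightarrow> real^'n \<Rightarrow> real" and A B :: "real^'n \<Rightarrow> real^'n"
  assumes pm: "pseudo_metric g" and lA: "linear A" and lB: "linear B"
    and adj: "\<And>x y. g (A x) y = g x (B y)"
  shows "trace (matrix A) = trace (matrix B)"
proof -
  have bil: "bilinear g" and sym: "\<And>x y. g x y = g y x"
    using pm unfolding pseudo_metric_def by auto
  obtain w where hw: "\<And>i x. g x (w i) = x $ i"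
    using dual_vec[OF pm] by metis
  have wsym: "(w i) $ k = (w k) $ i" for i k
    using hw[of "w i" k] hw[of "w k" i] sym by metis
  have "trace (matrix A) = (\<Sum>i\<in>UNIV. g (B (w i)) (axis i 1))"
  proof -
    have "trace (matrix A) = (\<Sum>i\<in>UNIV. g (A (axis i 1)) (w i))"
      using trace_dual[of g w A, OF hw] .
    also have "\<dots> = (\<Sum>i\<in>UNIV. g (B (w i)) (axis i 1))"
      by (intro sum.cong refl) (metis adj sym)
    finally show ?thesis .
  qed
  also have "\<dots> = (\<Sum>i\<in>UNIV. \<Sum>k\<in>UNIV. (w k)$i * g (B (axis k 1)) (axis i 1))"
  proof (intro sum.cong refl)
    fix i
    have l: "linear (\<lambda>x. g (B x) (axis i 1))"
      using linear_compose[OF lB bil_linL[OF bil]] by (simp add: o_def)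
    show "g (B (w i)) (axis i 1) = (\<Sum>k\<in>UNIV. (w k)$i * g (B (axis k 1)) (axis i 1))"
      using lin_expand[OF l, of "w i"] wsym by simp
  qed
  also have "\<dots> = (\<Sum>k\<in>UNIV. \<Sum>i\<in>UNIV. (w k)$i * g (B (axis k 1)) (axis i 1))"
    by (rule sum.swap)
  also have "\<dots> = (\<Sum>k\<in>UNIV. g (B (axis k 1)) (w k))"
  proof (intro sum.cong refl)
    fix k
    show "(\<Sum>i\<in>UNIV. (w k)$i * g (B (axis k 1)) (axis i 1)) = g (B (axis k 1)) (w k)"
      using lin_expand[OF bil_linR[OF bil], of "B (axis k 1)" "w k"] by simp
  qed
  also have "\<dots> = trace (matrix B)" by (simp add: trace_formula hw)
  finally show ?thesis .
qed

lemma trace_cyc: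
  fixes f h :: "real^'n \<Rightarrow> real^'n"
  assumes "linear f" "linear h"
  shows "trace (matrix (\<lambda>x. f (h x))) = trace (matrix (\<lambda>x. h (f x)))"
proof -
  have e1: "(\<lambda>x. f (h x)) = f \<circ> h" and e2: "(\<lambda>x. h (f x)) = h \<circ> f" by (auto simp: fun_eq_iff)
  have "trace (matrix (f \<circ> h)) = trace (matrix f ** matrix h)"
    by (simp only: matrix_compose[OF assms(2,1)])
  also have "\<dots> = trace (matrix h ** matrix f)" by (rule trace_mul_sym)
  also have "\<dots> = trace (matrix (h \<circ> f))"
    by (simp only: matrix_compose[OF assms(1,2)])
  finally show ?thesis unfolding e1 e2 .
qed

lemma trace_add_fun: "trace (matrix (\<lambda>x. (f::real^'n\<Rightarrow>real^'n) x + h x)) = trace (matrix f) + trace (matrix h)"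
  by (simp add: trace_formula sum.distrib)
lemma trace_diff_fun: "trace (matrix (\<lambda>x. (f::real^'n\<Rightarrow>real^'n) x - h x)) = trace (matrix f) - trace (matrix h)"
  by (simp add: trace_formula sum_subtractf)
lemma trace_neg_fun: "trace (matrix (\<lambda>x. - (f::real^'n\<Rightarrow>real^'n) x)) = - trace (matrix f)"
  by (simp add: trace_formula sum_negf)
lemma trace_scale_fun: "trace (matrix (\<lambda>x. c *\<^sub>R (f::real^'n\<Rightarrow>real^'n) x)) = c * trace (matrix f)"
  by (simp add: trace_formula sum_distrib_left)



lemma nil_restr:
  fixes A P :: "real^'n \<Rightarrow> real^'n"
  assumes lA: "linear A" and lP: "linear P" and PS: "\<And>x. P x \<in> S" and Pid: "\<And>y. y \<in> S \<Longrightarrow> P y = y"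
    and AS: "\<And>y. y \<in> S \<Longrightarrow> A y \<in> S" and nil: "\<And>x. (A ^^ m) x = 0"
  shows "trace (matrix (\<lambda>x. P (A (P x)))) = 0"
proof -
  define f where "f x = P (A (P x))" for x
  have lf: "linear f" unfolding f_def
    using linear_compose[OF linear_compose[OF lP lA] lP] by (simp add: o_def)
  have fS: "(f ^^ j) y = (A ^^ j) y \<and> (A ^^ j) y \<in> S" if "y \<in> S" for j y
  proof (induction j)
    case 0 then show ?case using that by simp
  next
    case (Suc j)
    then show ?case using AS Pid by (simp add: f_def)
  qed
  have "(f ^^ Suc m) x = 0" for x
  proof -
    have "(f ^^ Suc m) x = (f ^^ m) (f x)" by (simp add: funpow_swap1)
    also have "\<dots> = (A ^^ m) (f x)" using fS[of "f x" m] PS by (simp add: f_def)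
    finally show ?thesis using nil by simp
  qed
  then show ?thesis using nilpotent_trace[OF lf] unfolding f_def by blast
qed

lemma key_abstract:
  fixes P Q A E :: "real^'n \<Rightarrow> real^'n"
  assumes lP: "linear P" and lQ: "linear Q" and lA: "linear A" and lE: "linear E"
    and PP: "\<And>x. P (P x) = P x" and QQ: "\<And>x. Q (Q x) = Q x" and PQ: "\<And>x. P x + Q x = x"
    and PEP: "\<And>x. P (E (P x)) = P (A (P x))"
    and trA: "trace (matrix A) = 0" and trQ: "trace (matrix (\<lambda>x. Q (A (Q x)))) = 0"
  shows "trace (matrix (\<lambda>x. P (E x))) = 0"
proof -
  have lPE: "linear (\<lambda>x. P (E x))" using linear_compose[OF lE lP] by (simp add: o_def)
  have lPA: "linear (\<lambda>x. P (A x))" using linear_compose[OF lA lP] by (simp add: o_def)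
  have lQA: "linear (\<lambda>x. Q (A x))" using linear_compose[OF lA lQ] by (simp add: o_def)
  have "trace (matrix (\<lambda>x. P (E x))) = trace (matrix (\<lambda>x. P (P (E x))))" by (simp add: PP)
  also have "\<dots> = trace (matrix (\<lambda>x. P (E (P x))))" using trace_cyc[OF lP lPE] by simp
  also have "\<dots> = trace (matrix (\<lambda>x. P (A (P x))))" by (simp add: PEP)
  also have "\<dots> = trace (matrix (\<lambda>x. P (P (A x))))" using trace_cyc[OF lP lPA] by simp
  also have "\<dots> = trace (matrix (\<lambda>x. A x - Q (A x)))"
    by (metis PP PQ add_diff_cancel_right')
  also have "\<dots> = trace (matrix A) - trace (matrix (\<lambda>x. Q (A x)))"
    using trace_diff_fun[of A "\<lambda>x. Q (A x)"] by simp
  also have "trace (matrix (\<lambda>x. Q (A x))) = trace (matrix (\<lambda>x. Q (Q (A x))))" by (simp add: QQ)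
  also have "\<dots> = trace (matrix (\<lambda>x. Q (A (Q x))))" using trace_cyc[OF lQ lQA] by simp
  finally show ?thesis using trA trQ by simp
qed



locale pk =
  fixes br :: "real^'n \<Rightarrow> real^'n \<Rightarrow> real^'n"
    and V H :: "(real^'n) set"
    and g :: "real^'n \<Rightarrow> real^'n \<Rightarrow> real"
    and D :: "real^'n \<Rightarrow> real^'n \<Rightarrow> real^'n"
  assumes nil: "nilpotent_lie_algebra br"
    and pkh: "left_inv_parakaehler br V H g"
    and lc: "levi_civita br g D"
begin

abbreviation "K \<equiv> paraK V H"

lemma brbil: "bilinear br" and bralt: "br x x = 0"
  and jac: "br x (br y z) + br y (br z x) + br z (br x y) = 0"
  using nil unfolding nilpotent_lie_algebra_def lie_algebra_def by auto

lemma brskew: "br y x = - br x y"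
proof -
  have "br (x + y) (x + y) = 0" by (rule bralt)
  then show ?thesis using bralt[of x] bralt[of y]
    by (simp add: bilinear_ladd[OF brbil] bilinear_radd[OF brbil] add_eq_0_iff)
qed

lemma subV: "subspace V" and subH: "subspace H" and VH: "V \<inter> H = {0}"
  and decomp: "\<exists>v\<in>V. \<exists>h\<in>H. x = v + h"
  using pkh unfolding left_inv_parakaehler_def para_splitting_def by auto

lemma gbil: "bilinear g" and gsym: "g x y = g y x" and gnd: "(\<And>y. g x y = 0) \<Longrightarrow> x = 0"
  and pm: "pseudo_metric g"
  using pkh unfolding left_inv_parakaehler_def pseudo_metric_def by auto

lemma Kanti: "g (K x) (K y) = - g x y"
  using pkh unfolding left_inv_parakaehler_def by auto

lemma Dbil: "bilinear D" and tors: "D X Y - D Y X = br X Y"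
  and met: "g (D X Y) Z + g Y (D X Z) = 0"
  using lc unfolding levi_civita_def by auto

lemma par: "g (K (D X Y)) Z + g (K Y) (D X Z) = 0"
  using pkh lc unfolding left_inv_parakaehler_def parakaehler_form_def by auto

lemma uniq: "v \<in> V \<Longrightarrow> h \<in> H \<Longrightarrow> v' \<in> V \<Longrightarrow> h' \<in> H \<Longrightarrow> v + h = v' + h' \<Longrightarrow> v = v' \<and> h = h'"
proof -
  assume a: "v \<in> V" "h \<in> H" "v' \<in> V" "h' \<in> H" "v + h = v' + h'"
  have "v - v' = h' - h" using a(5) by (simp add: algebra_simps)
  moreover have "v - v' \<in> V" using subV a by (simp add: subspace_diff)
  moreover have "h' - h \<in> H" using subH a by (simp add: subspace_diff)
  ultimately have "v - v' = 0" using VH by (metis IntI singletonD)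
  then show ?thesis using a(5) by simp
qed

lemma Kvh: "v \<in> V \<Longrightarrow> h \<in> H \<Longrightarrow> K (v + h) = v - h"
  unfolding paraK_def
proof (rule the_equality)
  assume "v \<in> V" "h \<in> H"
  then show "\<exists>v'\<in>V. \<exists>h'\<in>H. v + h = v' + h' \<and> v - h = v' - h'" by blast
next
  fix y assume a: "v \<in> V" "h \<in> H" and "\<exists>v'\<in>V. \<exists>h'\<in>H. v + h = v' + h' \<and> y = v' - h'"
  then obtain v' h' where b: "v' \<in> V" "h' \<in> H" "v + h = v' + h'" "y = v' - h'" by blast
  then show "y = v - h" using uniq[OF a b(1,2,3)] by simp
qed

lemma KV: "v \<in> V \<Longrightarrow> K v = v"
  using Kvh[of v 0] subH by (simp add: subspace_0)
lemma KH: "h \<in> H \<Longrightarrow> K h = - h"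
  using Kvh[of 0 h] subV by (simp add: subspace_0)

lemma Klin: "linear K"
proof (rule linearI)
  fix x y
  obtain v h where x: "v \<in> V" "h \<in> H" "x = v + h" using decomp by blast
  obtain v' h' where y: "v' \<in> V" "h' \<in> H" "y = v' + h'" using decomp by blast
  have e: "x + y = (v + v') + (h + h')" using x y by (simp add: algebra_simps)
  have "K ((v + v') + (h + h')) = (v + v') - (h + h')"
    by (rule Kvh) (simp_all add: subspace_add subV subH x y)
  then have kxy: "K (x + y) = (v + v') - (h + h')" using e by simp
  have kx: "K x = v - h" using Kvh[OF x(1,2)] x(3) by simp
  have ky: "K y = v' - h'" using Kvh[OF y(1,2)] y(3) by simp
  show "K (x + y) = K x + K y" unfolding kxy kx ky by (simp add: algebra_simps)
next
  fix c :: real and x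
  obtain v h where x: "v \<in> V" "h \<in> H" "x = v + h" using decomp by blast
  have e: "c *\<^sub>R x = c *\<^sub>R v + c *\<^sub>R h" using x by (simp add: algebra_simps)
  have "K (c *\<^sub>R v + c *\<^sub>R h) = c *\<^sub>R v - c *\<^sub>R h"
    by (rule Kvh) (simp_all add: subspace_scale subV subH x)
  then have kcx: "K (c *\<^sub>R x) = c *\<^sub>R v - c *\<^sub>R h" using e by simp
  have kx: "K x = v - h" using Kvh[OF x(1,2)] x(3) by simp
  show "K (c *\<^sub>R x) = c *\<^sub>R K x" unfolding kcx kx by (simp add: algebra_simps)
qed

lemma KK: "K (K x) = x"
proof -
  obtain v h where x: "v \<in> V" "h \<in> H" "x = v + h" using decomp by blast
  have kx: "K x = v + (- h)" using Kvh x by simp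
  have "K (v + (- h)) = v - (- h)"
    by (rule Kvh) (simp_all add: subspace_neg subH x)
  then show ?thesis using kx x by simp
qed

lemma Kfix: "K x = x \<Longrightarrow> x \<in> V"
proof -
  assume a: "K x = x"
  obtain v h where x: "v \<in> V" "h \<in> H" "x = v + h" using decomp by blast
  then have "v - h = v + h" using a Kvh by simp
  then have "h = - h" by (simp add: algebra_simps)
  then have "h = 0" by (simp add: vec_eq_iff)
  then show ?thesis using x by simp
qed

lemma Kneg: "K x = - x \<Longrightarrow> x \<in> H"
proof -
  assume a: "K x = - x"
  obtain v h where x: "v \<in> V" "h \<in> H" "x = v + h" using decomp by blast
  then have "v - h = - (v + h)" using a Kvh by simp
  then have "v = - v" by (simp add: algebra_simps)
  then have "v = 0" by (simp add: vec_eq_iff)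
  then show ?thesis using x by simp
qed

lemma gK: "g (K x) y = - g x (K y)"
  using Kanti[of x "K y"] KK by simp

lemma K_add: "K (x + y) = K x + K y" and K_diff: "K (x - y) = K x - K y"
  and K_neg: "K (- x) = - K x" and K_scale: "K (c *\<^sub>R x) = c *\<^sub>R K x"
  using Klin by (auto simp: linear_add linear_diff linear_neg linear_scale)

definition PV where "PV x = (1/2) *\<^sub>R (x + K x)"
definition PH where "PH x = (1/2) *\<^sub>R (x - K x)"

lemma PV_in: "PV x \<in> V"
  by (rule Kfix) (simp add: PV_def K_scale K_add KK algebra_simps)
lemma PH_in: "PH x \<in> H"
  by (rule Kneg) (simp add: PH_def K_scale K_diff KK algebra_simps)
lemma PVPH: "PV x + PH x = x" by (simp add: PV_def PH_def vec_eq_iff field_simps)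
lemma K_PVPH: "K x = PV x - PH x" by (simp add: PV_def PH_def algebra_simps)
lemma PV_V: "v \<in> V \<Longrightarrow> PV v = v" by (simp add: PV_def KV)
lemma PH_H: "h \<in> H \<Longrightarrow> PH h = h" by (simp add: PH_def KH)
lemma PV_H: "h \<in> H \<Longrightarrow> PV h = 0" by (simp add: PV_def KH)
lemma PH_V: "v \<in> V \<Longrightarrow> PH v = 0" by (simp add: PH_def KV)
lemma PVPV: "PV (PV x) = PV x" using PV_V PV_in by blast
lemma PHPH: "PH (PH x) = PH x" using PH_H PH_in by blast
lemma PV_lin: "linear PV"
  unfolding PV_def by (intro linearI) (simp_all add: K_add K_scale algebra_simps)
lemma PH_lin: "linear PH"
  unfolding PH_def by (intro linearI) (simp_all add: K_add K_scale K_diff algebra_simps)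

lemma g_ldiff: "g (x - y) z = g x z - g y z" using bilinear_lsub[OF gbil] by simp
lemma g_rdiff: "g z (x - y) = g z x - g z y" using bilinear_rsub[OF gbil] by simp
lemma g_ladd: "g (x + y) z = g x z + g y z" using bilinear_ladd[OF gbil] by simp
lemma g_radd: "g z (x + y) = g z x + g z y" using bilinear_radd[OF gbil] by simp
lemma g_lneg: "g (- x) z = - g x z" using bilinear_lneg[OF gbil] by simp
lemma g_rneg: "g z (- x) = - g z x" using bilinear_rneg[OF gbil] by simp
lemma g_lscale: "g (c *\<^sub>R x) z = c * g x z" using bilinear_lmul[OF gbil] by simp
lemma g_rscale: "g z (c *\<^sub>R x) = c * g z x" using bilinear_rmul[OF gbil] by simp

lemma g_PH: "g (PH u) y = g u (PV y)"
  by (simp add: PH_def PV_def g_lscale g_rscale g_ldiff g_radd gK)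

lemma g_eqI: "(\<And>z. g x z = g y z) \<Longrightarrow> x = y"
proof -
  assume "\<And>z. g x z = g y z"
  then have "g (x - y) z = 0" for z by (simp add: g_ldiff)
  then show "x = y" using gnd[of "x - y"] by simp
qed

lemma D_ladd: "D (x + y) z = D x z + D y z" using bilinear_ladd[OF Dbil] by simp
lemma D_radd: "D z (x + y) = D z x + D z y" using bilinear_radd[OF Dbil] by simp
lemma D_ldiff: "D (x - y) z = D x z - D y z" using bilinear_lsub[OF Dbil] by simp
lemma D_rdiff: "D z (x - y) = D z x - D z y" using bilinear_rsub[OF Dbil] by simp
lemma D_lscale: "D (c *\<^sub>R x) z = c *\<^sub>R D x z" using bilinear_lmul[OF Dbil] by simp
lemma D_rscale: "D z (c *\<^sub>R x) = c *\<^sub>R D z x" using bilinear_rmul[OF Dbil] by simp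
lemma D_lneg: "D (- x) z = - D x z" using bilinear_lneg[OF Dbil] by simp
lemma D_rneg: "D z (- x) = - D z x" using bilinear_rneg[OF Dbil] by simp
lemma br_ladd: "br (x + y) z = br x z + br y z" using bilinear_ladd[OF brbil] by simp
lemma br_radd: "br z (x + y) = br z x + br z y" using bilinear_radd[OF brbil] by simp
lemma br_lscale: "br (c *\<^sub>R x) z = c *\<^sub>R br x z" using bilinear_lmul[OF brbil] by simp
lemma br_rscale: "br z (c *\<^sub>R x) = c *\<^sub>R br z x" using bilinear_rmul[OF brbil] by simp

lemma DK: "D X (K Y) = K (D X Y)"
proof (rule g_eqI)
  fix Z
  show "g (D X (K Y)) Z = g (K (D X Y)) Z"
    using met[of X "K Y" Z] par[of X Y Z] by linarith
qed

lemma DV: "v \<in> V \<Longrightarrow> D X v \<in> V"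
  by (rule Kfix) (simp add: DK[symmetric] KV)
lemma DH: "h \<in> H \<Longrightarrow> D X h \<in> H"
  by (rule Kneg) (simp add: DK[symmetric] KH D_rneg)

lemma D_lin: "linear (D X)" by (rule bil_linR[OF Dbil])
lemma D_linL: "linear (\<lambda>X. D X Y)" using bil_linL[OF Dbil] .
lemma br_lin: "linear (br X)" by (rule bil_linR[OF brbil])

end



context pk
begin

lemma ad_nil: "\<exists>m. \<forall>x. (br h ^^ m) x = 0"
proof -
  obtain k where k: "lcs br k = {0}" using nil unfolding nilpotent_lie_algebra_def by blast
  have "(br h ^^ j) x \<in> lcs br j" for j x
  proof (induction j)
    case 0 then show ?case by simp
  next
    case (Suc j)
    then show ?case by (auto intro!: span_base)
  qed
  then show ?thesis using k by blast
qed

lemma tr_ad: "trace (matrix (br h)) = 0"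
  using ad_nil[of h] nilpotent_trace[OF br_lin] by blast

lemma brV: "v \<in> V \<Longrightarrow> v' \<in> V \<Longrightarrow> br v v' \<in> V"
  using tors[of v v'] DV subspace_diff[OF subV] by metis
lemma brH: "h \<in> H \<Longrightarrow> h' \<in> H \<Longrightarrow> br h h' \<in> H"
  using tors[of h h'] DH subspace_diff[OF subH] by metis

lemma PV_add: "PV (x + y) = PV x + PV y" using PV_lin by (simp add: linear_add)
lemma PH_add: "PH (x + y) = PH x + PH y" using PH_lin by (simp add: linear_add)

lemma lin_comp: "linear f \<Longrightarrow> linear h \<Longrightarrow> linear (\<lambda>x. f (h x))"
  using linear_compose[of h f] by (simp add: o_def)

lemma tr_PHD: "trace (matrix (\<lambda>x. PH (D W x))) = - trace (matrix (\<lambda>x. PV (D W x)))"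
proof -
  have "trace (matrix (\<lambda>x. PH (D W x))) = trace (matrix (\<lambda>y. - D W (PV y)))"
  proof (rule trace_adjoint[OF pm])
    show "linear (\<lambda>x. PH (D W x))" by (rule lin_comp[OF PH_lin D_lin])
    show "linear (\<lambda>y. - D W (PV y))"
      using linear_compose_neg[OF lin_comp[OF D_lin PV_lin]] by simp
    fix x y
    show "g (PH (D W x)) y = g x (- D W (PV y))"
      using met[of W x "PV y"] by (simp add: g_PH g_rneg)
  qed
  also have "\<dots> = - trace (matrix (\<lambda>y. D W (PV y)))" by (rule trace_neg_fun)
  also have "trace (matrix (\<lambda>y. D W (PV y))) = trace (matrix (\<lambda>x. PV (D W x)))"
    using trace_cyc[OF PV_lin D_lin] by simp
  finally show ?thesis .
qed

lemma tr_PVD_H: "h \<in> H \<Longrightarrow> trace (matrix (\<lambda>x. PV (D h x))) = 0"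
proof -
  assume h: "h \<in> H"
  obtain m where m: "\<And>x. (br h ^^ m) x = 0" using ad_nil by blast
  show ?thesis
  proof (rule key_abstract[OF PV_lin PH_lin br_lin D_lin PVPV PHPH PVPH])
    fix x
    have "D h (PV x) = D (PV x) h + br h (PV x)" using tors[of h "PV x"] by (simp add: algebra_simps)
    moreover have "PV (D (PV x) h) = 0" using PV_H DH h by blast
    ultimately show "PV (D h (PV x)) = PV (br h (PV x))" by (simp add: PV_add)
  next
    show "trace (matrix (br h)) = 0" by (rule tr_ad)
    show "trace (matrix (\<lambda>x. PH (br h (PH x)))) = 0"
      using nil_restr[OF br_lin PH_lin PH_in PH_H _ m] brH[OF h] by blast
  qed
qed

lemma tr_PHD_V: "v \<in> V \<Longrightarrow> trace (matrix (\<lambda>x. PH (D v x))) = 0"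
proof -
  assume v: "v \<in> V"
  obtain m where m: "\<And>x. (br v ^^ m) x = 0" using ad_nil by blast
  have PHPV: "PH x + PV x = x" for x using PVPH[of x] by (simp add: add.commute)
  show ?thesis
  proof (rule key_abstract[OF PH_lin PV_lin br_lin D_lin PHPH PVPV PHPV])
    fix x
    have "D v (PH x) = D (PH x) v + br v (PH x)" using tors[of v "PH x"] by (simp add: algebra_simps)
    moreover have "PH (D (PH x) v) = 0" using PH_V DV v by blast
    ultimately show "PH (D v (PH x)) = PH (br v (PH x))" by (simp add: PH_add)
  next
    show "trace (matrix (br v)) = 0" by (rule tr_ad)
    show "trace (matrix (\<lambda>x. PV (br v (PV x)))) = 0"
      using nil_restr[OF br_lin PV_lin PV_in PV_V _ m] brV[OF v] by blast
  qed
qed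

lemma tr_PVD: "trace (matrix (\<lambda>x. PV (D W x))) = 0"
proof -
  have "(\<lambda>x. PV (D W x)) = (\<lambda>x. PV (D (PV W) x) + PV (D (PH W) x))"
  proof
    fix x
    have "D W x = D (PV W) x + D (PH W) x" using PVPH[of W] D_ladd by metis
    then show "PV (D W x) = PV (D (PV W) x) + PV (D (PH W) x)" by (simp add: PV_add)
  qed
  then have "trace (matrix (\<lambda>x. PV (D W x))) =
     trace (matrix (\<lambda>x. PV (D (PV W) x))) + trace (matrix (\<lambda>x. PV (D (PH W) x)))"
    using trace_add_fun by simp
  also have "trace (matrix (\<lambda>x. PV (D (PH W) x))) = 0" by (rule tr_PVD_H[OF PH_in])
  also have "trace (matrix (\<lambda>x. PV (D (PV W) x))) = 0"
    using tr_PHD[of "PV W"] tr_PHD_V[OF PV_in] by simp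
  finally show ?thesis by simp
qed

lemma tr_KD: "trace (matrix (\<lambda>x. K (D W x))) = 0"
proof -
  have "trace (matrix (\<lambda>x. K (D W x))) = trace (matrix (\<lambda>x. PV (D W x) - PH (D W x)))"
    by (simp add: K_PVPH)
  also have "\<dots> = trace (matrix (\<lambda>x. PV (D W x))) - trace (matrix (\<lambda>x. PH (D W x)))"
    by (rule trace_diff_fun)
  finally show ?thesis using tr_PHD[of W] tr_PVD[of W] by simp
qed

end



context pk
begin

abbreviation "R \<equiv> curvature br D"

lemma R_lin3: "linear (\<lambda>Z. R X Y Z)"
  by (intro linearI) (simp_all add: curvature_def D_radd D_rscale algebra_simps)

lemma R_lin1: "linear (\<lambda>X. R X Y Z)"
  by (intro linearI) (simp_all add: curvature_def D_radd D_rscale D_ladd D_lscale br_ladd br_lscale algebra_simps)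

lemma RK: "R X Y (K Z) = K (R X Y Z)"
  by (simp add: curvature_def DK K_diff)

lemma R_skew12: "R Y X Z = - R X Y Z"
  by (simp add: curvature_def brskew[of X Y] D_lneg algebra_simps)

lemma D_skew: "g (D X Y) Z = - g Y (D X Z)" using met[of X Y Z] by linarith

lemma R_skewg: "g (R X Y Z) W = - g Z (R X Y W)"
  by (simp add: curvature_def g_ldiff g_rdiff D_skew)

lemma bianchi: "R X Y Z + R Y Z X + R Z X Y = 0"
proof -
  have e: "R X Y Z + R Y Z X + R Z X Y =
    (D X (D Y Z - D Z Y) - D (br Y Z) X) + (D Y (D Z X - D X Z) - D (br Z X) Y)
    + (D Z (D X Y - D Y X) - D (br X Y) Z)"
    by (simp add: curvature_def D_rdiff algebra_simps)
  have a: "D X (D Y Z - D Z Y) - D (br Y Z) X = br X (br Y Z)" for X Y Z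
    using tors[of X "br Y Z"] tors[of Y Z] by simp
  show ?thesis unfolding e a using jac by simp
qed

abbreviation "Rm X Y Z W \<equiv> g (R X Y Z) W"

lemma Rm_skew1: "Rm X Y Z W = - Rm Y X Z W" by (simp add: R_skew12[of Y X] g_lneg)
lemma Rm_skew2: "Rm X Y Z W = - Rm X Y W Z" using R_skewg[of X Y Z W] gsym by metis
lemma Rm_bianchi: "Rm X Y Z W + Rm Y Z X W + Rm Z X Y W = 0"
  using bianchi[of X Y Z] by (metis g_ladd bilinear_lzero[OF gbil])

lemma pair: "Rm X Y Z W = Rm Z W X Y"
  using Rm_bianchi[of X Y Z W] Rm_bianchi[of Y Z W X] Rm_bianchi[of Z W X Y] Rm_bianchi[of W X Y Z]
    Rm_skew1[of X Y Z W] Rm_skew1[of Y Z X W] Rm_skew1[of Z X Y W]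
    Rm_skew1[of Y Z W X] Rm_skew1[of Z W Y X] Rm_skew1[of W Y Z X]
    Rm_skew1[of Z W X Y] Rm_skew1[of W X Z Y] Rm_skew1[of X Z W Y]
    Rm_skew1[of W X Y Z] Rm_skew1[of X Y W Z] Rm_skew1[of Y W X Z]
    Rm_skew2[of X Y Z W] Rm_skew2[of Y Z X W] Rm_skew2[of Z X Y W]
    Rm_skew2[of Y Z W X] Rm_skew2[of Z W Y X] Rm_skew2[of W Y Z X]
    Rm_skew2[of Z W X Y] Rm_skew2[of W X Z Y] Rm_skew2[of X Z W Y]
    Rm_skew2[of W X Y Z] Rm_skew2[of X Y W Z] Rm_skew2[of Y W X Z]
    Rm_skew1[of X Z Y W] Rm_skew2[of X Z Y W] Rm_skew1[of Z Y X W] Rm_skew2[of Z Y X W]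
    Rm_skew1[of Y X Z W] Rm_skew2[of Y X Z W]
    Rm_skew1[of Z X W Y] Rm_skew2[of Z X W Y] Rm_skew1[of Y W Z X] Rm_skew2[of Y W Z X]
    Rm_skew1[of W Z Y X] Rm_skew2[of W Z Y X] Rm_skew1[of X W Y Z] Rm_skew2[of X W Y Z]
  by linarith

end



context pk
begin

lemma RKK: "R (K X) (K Z) A = - R X Z A"
proof (rule g_eqI)
  fix B
  have "Rm (K X) (K Z) A B = Rm A B (K X) (K Z)" by (rule pair)
  also have "\<dots> = g (K (R A B X)) (K Z)" by (simp add: RK)
  also have "\<dots> = - Rm A B X Z" by (rule Kanti)
  also have "\<dots> = - Rm X Z A B" by (simp add: pair[of A B X Z])
  finally show "g (R (K X) (K Z) A) B = g (- R X Z A) B" by (simp add: g_lneg)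
qed

lemma rho: "trace (matrix (\<lambda>A. K (R X Y A))) = 0"
proof -
  have e: "(\<lambda>A. K (R X Y A)) = (\<lambda>A. (K (D X (D Y A)) - K (D Y (D X A))) - K (D (br X Y) A))"
    by (simp add: curvature_def K_diff)
  have c: "trace (matrix (\<lambda>A. K (D X (D Y A)))) = trace (matrix (\<lambda>A. K (D Y (D X A))))"
  proof -
    have "trace (matrix (\<lambda>A. K (D X (D Y A)))) = trace (matrix (\<lambda>A. D X (K (D Y A))))"
      by (simp add: DK)
    also have "\<dots> = trace (matrix (\<lambda>A. K (D Y (D X A))))"
      using trace_cyc[OF D_lin lin_comp[OF Klin D_lin], of X Y] by simp
    finally show ?thesis .
  qed
  show ?thesis unfolding e trace_diff_fun c using tr_KD by simp
qed

lemma tr_R: "trace (matrix (\<lambda>A. R X Y A)) = 0"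
proof -
  have "trace (matrix (\<lambda>A. R X Y A)) = trace (matrix (\<lambda>A. - R X Y A))"
  proof (rule trace_adjoint[OF pm R_lin3])
    show "linear (\<lambda>A. - R X Y A)" using linear_compose_neg[OF R_lin3] by simp
    fix x y show "g (R X Y x) y = g x (- R X Y y)" by (simp add: R_skewg g_rneg)
  qed
  then show ?thesis using trace_neg_fun[of "\<lambda>A. R X Y A"] by simp
qed

lemma ric_K: "ricci br D Y Z = ricci br D (K Z) (K Y)"
proof -
  obtain w where hw: "\<And>i x. g x (w i) = x $ i" using dual_vec[OF pm] by metis
  have pt: "g (R e Y Z) u = - g (K (R Y (K Z) e)) u + g (R e (K Z) (K Y)) u" for e u
  proof -
    have 1: "g (R e Y Z) u = - g (R e Y (K Z)) (K u)" using Kanti[of "R e Y Z" u] by (simp add: RK)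
    have 2: "R e Y (K Z) = - R Y (K Z) e - R (K Z) e Y" using bianchi[of e Y "K Z"]
      by (simp add: algebra_simps eq_neg_iff_add_eq_0)
    have 3: "g (K (R Y (K Z) e)) u = - g (R Y (K Z) e) (K u)" by (rule gK)
    have 4: "g (R e (K Z) (K Y)) u = g (R (K Z) e Y) (K u)"
      using gK[of "R (K Z) e Y" u] by (simp add: R_skew12[of e "K Z"] RK K_neg g_lneg)
    show ?thesis unfolding 1 2 3 4 by (simp add: g_ldiff g_lneg)
  qed
  have "ricci br D Y Z = (\<Sum>i\<in>UNIV. g (R (axis i 1) Y Z) (w i))"
    unfolding ricci_def by (rule trace_dual[OF hw])
  also have "\<dots> = - (\<Sum>i\<in>UNIV. g (K (R Y (K Z) (axis i 1))) (w i))
      + (\<Sum>i\<in>UNIV. g (R (axis i 1) (K Z) (K Y)) (w i))"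
    by (simp add: pt sum.distrib sum_negf sum_subtractf)
  also have "(\<Sum>i\<in>UNIV. g (K (R Y (K Z) (axis i 1))) (w i)) = trace (matrix (\<lambda>A. K (R Y (K Z) A)))"
    by (rule trace_dual[OF hw, symmetric])
  also have "(\<Sum>i\<in>UNIV. g (R (axis i 1) (K Z) (K Y)) (w i)) = ricci br D (K Z) (K Y)"
    unfolding ricci_def by (rule trace_dual[OF hw, symmetric])
  finally show ?thesis using rho by simp
qed

lemma ric_KK: "ricci br D (K Z) (K Y) = - ricci br D Z Y"
proof -
  define f where "f X = R X (K Z) (K Y)" for X
  have lf: "linear f" unfolding f_def by (rule R_lin1)
  have "ricci br D (K Z) (K Y) = trace (matrix (\<lambda>X. f (K (K X))))"
    by (simp add: ricci_def f_def KK)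
  also have "\<dots> = trace (matrix (\<lambda>X. K (f (K X))))"
    using trace_cyc[OF Klin lin_comp[OF lf Klin]] by simp
  also have "(\<lambda>X. K (f (K X))) = (\<lambda>X. - R X Z Y)"
    by (simp add: f_def RK[symmetric] KK RKK K_neg)
  also have "trace (matrix (\<lambda>X. - R X Z Y)) = - ricci br D Z Y"
    unfolding ricci_def by (rule trace_neg_fun)
  finally show ?thesis .
qed

lemma ric_sym: "ricci br D Z Y = ricci br D Y Z"
proof -
  have "(\<lambda>X. R X Z Y) = (\<lambda>X. R Y Z X + R X Y Z)"
  proof
    fix X
    show "R X Z Y = R Y Z X + R X Y Z"
      using bianchi[of X Z Y] R_skew12[of Z Y X] R_skew12[of Y X Z]
      by (simp add: algebra_simps eq_neg_iff_add_eq_0)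
  qed
  moreover have "trace (matrix (\<lambda>X. R Y Z X + R X Y Z)) = trace (matrix (\<lambda>X. R Y Z X)) + trace (matrix (\<lambda>X. R X Y Z))"
    by (rule trace_add_fun)
  ultimately show ?thesis unfolding ricci_def using tr_R[of Y Z] by simp
qed

lemma ricci_zero: "ricci br D Y Z = 0"
  using ric_K[of Y Z] ric_KK[of Z Y] ric_sym[of Y Z] by simp

end


theorem corollary8p2:
  fixes br :: "real^'n \<Rightarrow> real^'n \<Rightarrow> real^'n"
    and V H :: "(real^'n) set"
    and g :: "real^'n \<Rightarrow> real^'n \<Rightarrow> real"
    and D :: "real^'n \<Rightarrow> real^'n \<Rightarrow> real^'n"
  assumes "nilpotent_lie_algebra br"
    and "left_inv_parakaehler br V H g"
    and "levi_civita br g D"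
  shows "\<forall>Y Z. ricci br D Y Z = 0"
proof -
  interpret pk br V H g D using assms by unfold_locales
  show ?thesis using ricci_zero by blast
qed

end
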